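(* Let $K\ge 2$, let $\pi_1,\dots,\pi_K>0$ with $\sum_k\pi_k=1$, and let $\mu_1,\dots,\mu_K$ be pairwise distinct reals. For $\epsilon\in[0,1-\max_k\pi_k]$ let $f(\epsilon)$ be the supremum of $$\sum_{k'=1}^K\tilde\pi_{k'}\tilde\mu_{k'}^2$$ over all matrices $(\pi_{kk'})_{k,k'=1}^K$ with $\pi_{kk'}\ge 0$, $\sum_{k'}\pi_{kk'}=\pi_k$ for all $k$, and $1-\sum_{k'}\max_k\pi_{kk'}\ge\epsilon$, where $\tilde\pi_{k'}=\sum_k\pi_{kk'}$, $\tilde\mu_{k'}=\sum_k\pi_{kk'}\mu_k/\tilde\pi_{k'}$, and terms with $\tilde\pi_{k'}=0$ are taken to be $0$. Then $f$ is non-increasing on $[0,1-\max_k\pi_k]$, $f(0)=\sum_k\pi_k\mu_k^2$, and $f(\epsilon)<f(0)$ for every $\epsilon\in(0,1-\max_k\pi_k]$.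
   Context: Here $\pi_{kk'}$ plays the role of the proportion of samples lying both in the $k$-th true cluster and the $k'$-th estimated cluster, and $1-\sum_{k'}\max_k\pi_{kk'}$ is the corresponding error clustering rate. *)

theory Defs
  imports "HOL-Analysis.Analysis"
begin

text \<open>Clusters are indexed by {..<K}. A matrix is P :: nat => nat => real, with P k k'
  the proportion of samples in true cluster k and estimated cluster k'.\<close>

definition col_mass :: "nat \<Rightarrow> (nat \<Rightarrow> nat \<Rightarrow> real) \<Rightarrow> nat \<Rightarrow> real" where
  "col_mass K P k' = (\<Sum>k<K. P k k')"

definition col_mean :: "nat \<Rightarrow> (nat \<Rightarrow> nat \<Rightarrow> real) \<Rightarrow> (nat \<Rightarrow> real) \<Rightarrow> nat \<Rightarrow> real" where
  "col_mean K P mu k' = (\<Sum>k<K. P k k' * mu k) / col_mass K P k'"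

definition objective :: "nat \<Rightarrow> (nat \<Rightarrow> nat \<Rightarrow> real) \<Rightarrow> (nat \<Rightarrow> real) \<Rightarrow> real" where
  "objective K P mu = (\<Sum>k'<K. if col_mass K P k' = 0 then 0
       else col_mass K P k' * (col_mean K P mu k')\<^sup>2)"

definition error_rate :: "nat \<Rightarrow> (nat \<Rightarrow> nat \<Rightarrow> real) \<Rightarrow> real" where
  "error_rate K P = 1 - (\<Sum>k'<K. Max ((\<lambda>k. P k k') ` {..<K}))"

definition feasible :: "nat \<Rightarrow> (nat \<Rightarrow> real) \<Rightarrow> real \<Rightarrow> (nat \<Rightarrow> nat \<Rightarrow> real) \<Rightarrow> bool" where
  "feasible K p eps P \<longleftrightarrow>
     (\<forall>k<K. \<forall>k'<K. P k k' \<ge> 0) \<and>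
     (\<forall>k<K. (\<Sum>k'<K. P k k') = p k) \<and>
     error_rate K P \<ge> eps"

definition fval :: "nat \<Rightarrow> (nat \<Rightarrow> real) \<Rightarrow> (nat \<Rightarrow> real) \<Rightarrow> real \<Rightarrow> real" where
  "fval K p mu eps = Sup {objective K P mu | P. feasible K p eps P}"

end

theory Submission
  imports Defs
begin

lemma col_bound:
  fixes x mu :: "nat \<Rightarrow> real" and D :: real
  assumes nn: "\<forall>k<K. x k \<ge> 0"
    and Dd: "\<forall>k<K. \<forall>j<K. k \<noteq> j \<longrightarrow> D \<le> (mu k - mu j)^2"
    and D0: "D \<ge> 0" and K0: "K > 0"
  shows "(if (\<Sum>k<K. x k) = 0 then 0 else (\<Sum>k<K. x k) * ((\<Sum>k<K. x k * mu k)/(\<Sum>k<K. x k))^2)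
     \<le> (\<Sum>k<K. x k * (mu k)^2) - D/2 * ((\<Sum>k<K. x k) - Max (x ` {..<K}))"
proof -
  define m where "m = (\<Sum>k<K. x k)"
  define S1 where "S1 = (\<Sum>k<K. x k * mu k)"
  define S2 where "S2 = (\<Sum>k<K. x k * (mu k)^2)"
  define M where "M = Max (x ` {..<K})"
  have xM: "x k \<le> M" if "k < K" for k unfolding M_def using that by (intro Max_ge) auto
  have M0: "M \<ge> 0" using xM[of 0] nn K0 by force
  have m0: "m \<ge> 0" unfolding m_def using nn by (intro sum_nonneg) auto
  have S20: "S2 \<ge> 0" unfolding S2_def using nn by (intro sum_nonneg) auto
  have id: "(\<Sum>k<K. \<Sum>j<K. x k * x j * (mu k - mu j)^2) = 2*(m*S2 - S1^2)"
  proof -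
    have "(\<Sum>k<K. \<Sum>j<K. x k * x j * (mu k - mu j)^2)
      = (\<Sum>k<K. \<Sum>j<K. x k * (mu k)^2 * x j + x j * (mu j)^2 * x k - 2 * (x k * mu k) * (x j * mu j))"
      by (intro sum.cong refl) (simp add: power2_diff algebra_simps)
    also have "\<dots> = S2 * m + S2 * m - 2 * S1 * S1"
    proof -
      have "(\<Sum>k<K. \<Sum>j<K. x k * (mu k)^2 * x j + x j * (mu j)^2 * x k - 2 * (x k * mu k) * (x j * mu j))
        = (\<Sum>k<K. x k * (mu k)^2 * m + S2 * x k - 2 * (x k * mu k) * S1)"
      proof (intro sum.cong refl)
        fix k
        show "(\<Sum>j<K. x k * (mu k)^2 * x j + x j * (mu j)^2 * x k - 2 * (x k * mu k) * (x j * mu j))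
           = x k * (mu k)^2 * m + S2 * x k - 2 * (x k * mu k) * S1"
        proof -
          have a: "(\<Sum>j<K. x k * (mu k)^2 * x j) = x k*(mu k)^2*m" by (simp add: m_def sum_distrib_left)
          have b: "(\<Sum>j<K. x j*(mu j)^2*x k) = S2 * x k" by (simp add: S2_def sum_distrib_right)
          have c: "(\<Sum>j<K. 2*(x k*mu k)*(x j*mu j)) = 2*(x k*mu k)*S1" by (simp add: S1_def sum_distrib_left)
          show ?thesis unfolding sum_subtractf sum.distrib a b c ..
        qed
      qed
      also have "\<dots> = S2 * m + S2 * m - 2 * S1 * S1"
      proof -
        have a: "(\<Sum>k<K. x k * (mu k)^2 * m) = S2 * m" by (simp add: S2_def sum_distrib_right)
        have b: "(\<Sum>k<K. S2 * x k) = S2 * m" by (simp add: m_def sum_distrib_left)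
        have c: "(\<Sum>k<K. 2*(x k*mu k)*S1) = 2*S1*S1" by (simp add: S1_def sum_distrib_right sum_distrib_left mult.commute)
        show ?thesis unfolding sum_subtractf sum.distrib a b c ..
      qed
      finally show ?thesis .
    qed
    finally show ?thesis by (simp add: power2_eq_square algebra_simps)
  qed
  have lb: "(\<Sum>k<K. \<Sum>j<K. x k * x j * (if k = j then 0 else D)) \<le> (\<Sum>k<K. \<Sum>j<K. x k * x j * (mu k - mu j)^2)"
    using nn Dd by (intro sum_mono mult_left_mono) auto
  have e2: "(\<Sum>k<K. \<Sum>j<K. x k * x j * (if k = j then 0 else D)) = (\<Sum>k<K. D * x k * (m - x k))"
  proof (intro sum.cong refl)
    fix k assume k: "k \<in> {..<K}"
    have "(\<Sum>j<K. x k * x j * (if k = j then 0 else D)) = (\<Sum>j<K. D * x k * x j - (if j = k then D * x k * x j else 0))"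
      by (intro sum.cong refl) auto
    also have "\<dots> = D * x k * m - D * x k * x k"
      using k by (simp add: sum_subtractf sum_distrib_left m_def)
    finally show "(\<Sum>j<K. x k * x j * (if k = j then 0 else D)) = D * x k * (m - x k)"
      by (simp add: algebra_simps)
  qed
  have e3: "(\<Sum>k<K. D * x k * (m - x k)) \<ge> (\<Sum>k<K. D * x k * (m - M))"
    using nn xM D0 by (intro sum_mono mult_left_mono) auto
  have e4: "(\<Sum>k<K. D * x k * (m - M)) = D * m * (m - M)"
    by (simp add: m_def sum_distrib_left sum_distrib_right)
  have key: "D * m * (m - M) \<le> 2*(m*S2 - S1^2)"
    using lb e2 e3 e4 id by linarith
  show ?thesis
  proof (cases "m = 0")
    case True
    then show ?thesis using S20 M0 D0 unfolding m_def[symmetric] S2_def[symmetric] M_def[symmetric]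
      by simp
  next
    case False
    then have mp: "m > 0" using m0 by simp
    have "m * (S1/m)^2 = S1^2/m" using mp by (simp add: power2_eq_square)
    also have "\<dots> \<le> S2 - D/2 * (m - M)"
      using key mp by (simp add: field_simps)
    finally show ?thesis using False unfolding m_def[symmetric] S1_def[symmetric] S2_def[symmetric] M_def[symmetric]
      by simp
  qed
qed


lemma obj_bound:
  fixes P :: "nat \<Rightarrow> nat \<Rightarrow> real" and p mu :: "nat \<Rightarrow> real" and D :: real
  assumes nn: "\<forall>k<K. \<forall>k'<K. P k k' \<ge> 0"
    and rows: "\<forall>k<K. (\<Sum>k'<K. P k k') = p k"
    and sp: "(\<Sum>k<K. p k) = 1"
    and Dd: "\<forall>k<K. \<forall>j<K. k \<noteq> j \<longrightarrow> D \<le> (mu k - mu j)^2"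
    and D0: "D \<ge> 0" and K0: "K > 0"
  shows "objective K P mu \<le> (\<Sum>k<K. p k * (mu k)^2) - D/2 * error_rate K P"
proof -
  have "objective K P mu \<le> (\<Sum>k'<K. (\<Sum>k<K. P k k' * (mu k)^2) - D/2 * ((\<Sum>k<K. P k k') - Max ((\<lambda>k. P k k') ` {..<K})))"
    unfolding objective_def col_mean_def col_mass_def
    by (intro sum_mono col_bound[OF _ Dd D0 K0]) (use nn in auto)
  also have "\<dots> = (\<Sum>k'<K. \<Sum>k<K. P k k' * (mu k)^2) - D/2 * ((\<Sum>k'<K. \<Sum>k<K. P k k') - (\<Sum>k'<K. Max ((\<lambda>k. P k k') ` {..<K})))"
    by (simp only: sum_subtractf sum_distrib_left[symmetric])
  also have "(\<Sum>k'<K. \<Sum>k<K. P k k' * (mu k)^2) = (\<Sum>k<K. p k * (mu k)^2)"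
    by (subst sum.swap) (simp add: rows sum_distrib_right[symmetric])
  also have "(\<Sum>k'<K. \<Sum>k<K. P k k') = 1"
    by (subst sum.swap) (simp add: rows sp)
  finally show ?thesis unfolding error_rate_def .
qed


theorem lemma4:
  fixes K :: nat and p mu :: "nat \<Rightarrow> real"
  assumes "K \<ge> 2"
    and "\<And>k. k < K \<Longrightarrow> p k > 0"
    and "(\<Sum>k<K. p k) = 1"
    and "\<And>k j. k < K \<Longrightarrow> j < K \<Longrightarrow> k \<noteq> j \<Longrightarrow> mu k \<noteq> mu j"
  defines "emax \<equiv> 1 - Max (p ` {..<K})"
  shows "(\<forall>e1 e2. 0 \<le> e1 \<longrightarrow> e1 \<le> e2 \<longrightarrow> e2 \<le> emax \<longrightarrow> fval K p mu e2 \<le> fval K p mu e1)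
    \<and> fval K p mu 0 = (\<Sum>k<K. p k * (mu k)\<^sup>2)
    \<and> (\<forall>e. 0 < e \<longrightarrow> e \<le> emax \<longrightarrow> fval K p mu e < fval K p mu 0)"
proof -
  note K2 = assms(1) and pp = assms(2) and sp = assms(3) and dist = assms(4)
  have K0: "K > 0" using K2 by simp
  define V where "V = (\<Sum>k<K. p k * (mu k)\<^sup>2)"
  define A where "A = (\<lambda>(k,j). (mu k - mu j)^2) ` {(k::nat,j). k<K \<and> j<K \<and> k \<noteq> j}"
  define D where "D = Min A"
  have finA: "finite A" unfolding A_def
    by (rule finite_imageI, rule finite_subset[of _ "{..<K} \<times> {..<K}"]) auto
  have neA: "A \<noteq> {}"
  proof -
    have "(0::nat,1::nat) \<in> {(k,j). k<K \<and> j<K \<and> k \<noteq> j}" using K2 by auto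
    then show ?thesis unfolding A_def by blast
  qed
  have Dd: "\<forall>k<K. \<forall>j<K. k \<noteq> j \<longrightarrow> D \<le> (mu k - mu j)^2"
    unfolding D_def using finA by (auto intro!: Min_le simp: A_def)
  have Dpos: "D > 0"
  proof -
    have "D \<in> A" unfolding D_def using finA neA by (rule Min_in)
    then show ?thesis unfolding A_def using dist by auto
  qed
  define S where "S = (\<lambda>e. {objective K P mu | P. feasible K p e P})"
  have fv: "fval K p mu e = Sup (S e)" for e unfolding fval_def S_def ..
  have ub: "x \<le> V - D/2 * e" if "x \<in> S e" for x e
  proof -
    from that obtain P where x: "x = objective K P mu" and f: "feasible K p e P"
      unfolding S_def by auto
    have "x \<le> V - D/2 * error_rate K P"
      unfolding x V_def using f Dd Dpos K0 sp by (intro obj_bound) (auto simp: feasible_def)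
    also have "\<dots> \<le> V - D/2 * e" using f Dpos by (auto simp: feasible_def)
    finally show ?thesis .
  qed
  have bdd: "bdd_above (S e)" if "e \<ge> 0" for e
    using ub[of _ e] that Dpos
    by (intro bdd_aboveI[of _ V]) (smt (verit, best) divide_nonneg_pos mult_nonneg_nonneg)
  define P0 where "P0 = (\<lambda>k k'::nat. if k' = 0 then p k else 0)"
  have maxP0: "Max ((\<lambda>k. P0 k k') ` {..<K}) = (if k' = 0 then Max (p ` {..<K}) else 0)" for k'
  proof (cases "k' = 0")
    case True then show ?thesis unfolding P0_def by simp
  next
    case False
    then have "(\<lambda>k. P0 k k') ` {..<K} = {0}" unfolding P0_def using K0 by auto
    then show ?thesis using False by simp
  qed
  have feas0: "feasible K p e P0" if "e \<le> emax" for e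
  proof -
    have "error_rate K P0 = emax"
      unfolding error_rate_def maxP0 emax_def using K0 by simp
    moreover have "\<forall>k<K. \<forall>k'<K. P0 k k' \<ge> 0" unfolding P0_def using pp by (auto simp: less_imp_le)
    moreover have "\<forall>k<K. (\<Sum>k'<K. P0 k k') = p k" unfolding P0_def using K0 by simp
    ultimately show ?thesis using that unfolding feasible_def by simp
  qed
  have ne: "S e \<noteq> {}" if "e \<le> emax" for e
    unfolding S_def using feas0[OF that] by auto
  define PI where "PI = (\<lambda>k k'::nat. if k = k' then p k else 0)"
  have massI: "col_mass K PI k' = p k'" if "k' < K" for k'
    unfolding col_mass_def PI_def using that by simp
  have sumI: "(\<Sum>k<K. PI k k' * mu k) = p k' * mu k'" if "k' < K" for k'
  proof -
    have "(\<Sum>k<K. PI k k' * mu k) = (\<Sum>k<K. if k = k' then p k' * mu k' else 0)"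
      unfolding PI_def by (intro sum.cong refl) auto
    then show ?thesis using that by simp
  qed
  have objI: "objective K PI mu = V"
    unfolding objective_def V_def
  proof (intro sum.cong refl)
    fix k' assume k': "k' \<in> {..<K}"
    then have "p k' > 0" using pp by auto
    then show "(if col_mass K PI k' = 0 then 0 else col_mass K PI k' * (col_mean K PI mu k')\<^sup>2) = p k' * (mu k')\<^sup>2"
      using k' massI sumI unfolding col_mean_def by (simp add: power2_eq_square)
  qed
  have maxI: "Max ((\<lambda>k. PI k k') ` {..<K}) = p k'" if "k' < K" for k'
    unfolding PI_def using that pp by (intro Max_eqI) (auto simp: less_imp_le)
  have feasI: "feasible K p 0 PI"
  proof -
    have "error_rate K PI = 0" unfolding error_rate_def using maxI sp by simp
    moreover have "\<forall>k<K. \<forall>k'<K. PI k k' \<ge> 0" unfolding PI_def using pp by (auto simp: less_imp_le)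
    moreover have "\<forall>k<K. (\<Sum>k'<K. PI k k') = p k" unfolding PI_def by simp
    ultimately show ?thesis unfolding feasible_def by simp
  qed
  have f0: "fval K p mu 0 = V"
    unfolding fv
  proof (rule cSup_eq_maximum)
    show "V \<in> S 0" unfolding S_def using feasI objI by force
    show "\<And>y. y \<in> S 0 \<Longrightarrow> y \<le> V" using ub[of _ 0] by simp
  qed
  have mono: "fval K p mu e2 \<le> fval K p mu e1" if "0 \<le> e1" "e1 \<le> e2" "e2 \<le> emax" for e1 e2
    unfolding fv
  proof (rule cSup_subset_mono)
    show "S e2 \<noteq> {}" using ne that by simp
    show "bdd_above (S e1)" using bdd that by simp
    show "S e2 \<subseteq> S e1" unfolding S_def feasible_def using that by auto
  qed
  have strict: "fval K p mu e < fval K p mu 0" if "0 < e" "e \<le> emax" for e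
  proof -
    have "fval K p mu e \<le> V - D/2 * e" unfolding fv
      by (rule cSup_least) (use ne that ub in auto)
    also have "\<dots> < V" using Dpos that by simp
    finally show ?thesis using f0 by simp
  qed
  show ?thesis using mono f0 strict unfolding V_def by blast
qed

end
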